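(* Let $n\ge 2$ and $\varphi$ a linear functional with $\varphi(e_i)=a_i$, $0<a_1<\dots<a_n$. The number of $\varphi$-monotone paths on $\diamond^n$ is $\dfrac{2^{2n-1}-2}{3}$.
   Context: $\diamond^n=\mathrm{conv}\{\pm e_1,\dots,\pm e_n\}$. A monotone path is a sequence of vertices $-e_n=v_0,v_1,\dots,v_m=e_n$ of $\diamond^n$ such that each $[v_{j-1},v_j]$ is an edge of $\diamond^n$ (i.e. $v_{j-1}\ne -v_j$) and $\varphi(v_{j-1})<\varphi(v_j)$ for all $j$. *)

theory Defs
  imports Complex_Main
begin

text \<open>Points of R^n are modelled as functions nat => real; only the
coordinates 1..n matter. e i is the i-th standard basis vector.\<close>

definition unit_vec :: "nat \<Rightarrow> (nat \<Rightarrow> real)" where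
  "unit_vec i = (\<lambda>j. if j = i then 1 else 0)"

definition cross_vertices :: "nat \<Rightarrow> (nat \<Rightarrow> real) set" where
  "cross_vertices n = {unit_vec i | i. i \<in> {1..n}} \<union> {- unit_vec i | i. i \<in> {1..n}}"

definition lin_fun :: "nat \<Rightarrow> (nat \<Rightarrow> real) \<Rightarrow> (nat \<Rightarrow> real) \<Rightarrow> real" where
  "lin_fun n a x = (\<Sum>i=1..n. a i * x i)"

text \<open>Monotone paths: vertex sequences v_0 = -e_n, ..., v_m = e_n of the
cross-polytope, consecutive vertices forming an edge (not antipodal) and
phi strictly increasing along the path.\<close>
definition monotone_paths :: "nat \<Rightarrow> (nat \<Rightarrow> real) \<Rightarrow> (nat \<Rightarrow> real) list set" where
  "monotone_paths n a = {vs. vs \<noteq> [] \<and> set vs \<subseteq> cross_vertices n \<and>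
      hd vs = - unit_vec n \<and> last vs = unit_vec n \<and>
      (\<forall>j. 0 < j \<and> j < length vs \<longrightarrow>
          vs ! (j - 1) \<noteq> - (vs ! j) \<and>
          lin_fun n a (vs ! (j - 1)) < lin_fun n a (vs ! j))}"

end

theory Submission
  imports Defs
begin

fun good :: "int list \<Rightarrow> bool" where
  "good (x # y # ys) = (x \<noteq> - y \<and> good (y # ys))"
| "good _ = True"

definition Aset :: "nat \<Rightarrow> int set" where
  "Aset m = {k. k \<noteq> 0 \<and> - int m \<le> k \<and> k \<le> int m}"

definition Q :: "nat \<Rightarrow> int list set" where
  "Q m = {xs. sorted_wrt (<) xs \<and> set xs \<subseteq> Aset m \<and> good xs}"

lemma good_Cons: "good (x # xs) = (good xs \<and> (xs \<noteq> [] \<longrightarrow> x \<noteq> - hd xs))"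
  by (cases xs) auto

lemma good_snoc: "good (xs @ [y]) = (good xs \<and> (xs \<noteq> [] \<longrightarrow> last xs \<noteq> - y))"
  by (induction xs rule: good.induct) auto

lemma good_Suc: "good xs = (\<forall>i. Suc i < length xs \<longrightarrow> xs ! i \<noteq> - (xs ! Suc i))"
proof (induction xs rule: good.induct)
  case (1 x y ys)
  show ?case
    apply (simp add: 1)
    apply (rule iffI)
     apply clarsimp
     apply (case_tac i) apply auto
    done
qed auto

lemma jform: "(\<forall>j. 0 < j \<and> j < l \<longrightarrow> P (j - 1) j) = (\<forall>i. Suc i < l \<longrightarrow> P i (Suc i))"
  by (metis Suc_pred diff_Suc_1 zero_less_Suc)

lemma hd_min: "sorted_wrt R xs \<Longrightarrow> x \<in> set xs \<Longrightarrow> (\<forall>y\<in>set xs. \<not> R y x) \<Longrightarrow> \<exists>ys. xs = x # ys"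
  by (cases xs) auto

lemma last_max: "sorted_wrt R xs \<Longrightarrow> x \<in> set xs \<Longrightarrow> (\<forall>y\<in>set xs. \<not> R x y) \<Longrightarrow> \<exists>ys. xs = ys @ [x]"
proof -
  assume a: "sorted_wrt R xs" "x \<in> set xs" "\<forall>y\<in>set xs. \<not> R x y"
  have "sorted_wrt (\<lambda>a b. R b a) (rev xs)" using a(1) by (simp add: sorted_wrt_rev)
  then obtain ys where "rev xs = x # ys" using hd_min[of "\<lambda>a b. R b a" "rev xs" x] a by auto
  then have "xs = rev ys @ [x]" by (metis rev_eq_Cons_iff)
  then show ?thesis by blast
qed

lemma finite_Q: "finite (Q m)"
proof -
  have "Q m \<subseteq> {xs. set xs \<subseteq> Aset m \<and> length xs \<le> card (Aset m)}"
  proof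
    fix xs assume "xs \<in> Q m"
    then have "distinct xs" "set xs \<subseteq> Aset m" by (auto simp: Q_def strict_sorted_iff)
    moreover have "finite (Aset m)" unfolding Aset_def by (rule finite_subset[of _ "{-int m..int m}"]) auto
    ultimately show "xs \<in> {xs. set xs \<subseteq> Aset m \<and> length xs \<le> card (Aset m)}"
      by (metis (mono_tags, lifting) card_mono distinct_card mem_Collect_eq)
  qed
  moreover have "finite (Aset m)" unfolding Aset_def by (rule finite_subset[of _ "{-int m..int m}"]) auto
  ultimately show ?thesis using finite_lists_length_le finite_subset by blast
qed

lemma nil_Q: "[] \<in> Q m" by (simp add: Q_def)

lemma Aset0: "Aset 0 = {}" by (auto simp: Aset_def)

lemma Q0: "Q 0 = {[]}"
  by (auto simp: Q_def Aset0)

lemma Aset_Suc: "Aset (Suc m) = Aset m \<union> {- int (Suc m), int (Suc m)}"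
  by (auto simp: Aset_def)

lemma Aset_bound: "x \<in> Aset m \<Longrightarrow> - int m \<le> x \<and> x \<le> int m \<and> x \<noteq> 0"
  by (auto simp: Aset_def)

lemma sub_Suc: "set xs \<subseteq> Aset (Suc m) \<Longrightarrow> - int (Suc m) \<notin> set xs \<Longrightarrow> int (Suc m) \<notin> set xs \<Longrightarrow> set xs \<subseteq> Aset m"
  by (auto simp: Aset_Suc)

lemma Aset_mono: "Aset m \<subseteq> Aset (Suc m)" by (auto simp: Aset_Suc)

lemma notin_Aset: "int (Suc m) \<notin> Aset m" "- int (Suc m) \<notin> Aset m"
  by (auto simp: Aset_def)

lemma Qb: "ys \<in> Q m \<Longrightarrow> y \<in> set ys \<Longrightarrow> - int m \<le> y \<and> y \<le> int m"
  unfolding Q_def Aset_def by blast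

lemma Ab: "set xs \<subseteq> Aset k \<Longrightarrow> y \<in> set xs \<Longrightarrow> - int k \<le> y \<and> y \<le> int k"
  unfolding Aset_def by blast

lemma B1: "{xs\<in>Q (Suc m). - int (Suc m) \<notin> set xs \<and> int (Suc m) \<notin> set xs} = Q m"
proof -
  have "\<And>xs. xs \<in> Q m \<Longrightarrow> - int (Suc m) \<notin> set xs \<and> int (Suc m) \<notin> set xs"
    using notin_Aset unfolding Q_def by blast
  then show ?thesis using sub_Suc Aset_mono unfolding Q_def by blast
qed

lemma B2: "{xs\<in>Q (Suc m). - int (Suc m) \<in> set xs \<and> int (Suc m) \<notin> set xs} = Cons (- int (Suc m)) ` Q m"
proof
  show "Cons (- int (Suc m)) ` Q m \<subseteq> {xs\<in>Q (Suc m). - int (Suc m) \<in> set xs \<and> int (Suc m) \<notin> set xs}"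
  proof clarify
    fix ys assume ys: "ys \<in> Q m"
    have lt: "\<forall>y\<in>set ys. - int (Suc m) < y \<and> y < int (Suc m)"
    proof
      fix y assume "y \<in> set ys"
      from Qb[OF ys(1) this] show "- int (Suc m) < y \<and> y < int (Suc m)" by simp
    qed
    have h: "ys \<noteq> [] \<Longrightarrow> hd ys < int (Suc m)" using lt by simp
    have "sorted_wrt (<) (- int (Suc m) # ys)" using ys lt by (simp add: Q_def)
    moreover have "good (- int (Suc m) # ys)" 
    proof -
      have "ys \<noteq> [] \<longrightarrow> - int (Suc m) \<noteq> - hd ys" using h by auto
      then show ?thesis using ys by (simp add: Q_def good_Cons del: good.simps)
    qed
    moreover have "set (- int (Suc m) # ys) \<subseteq> Aset (Suc m)" using ys Aset_mono by (auto simp: Q_def Aset_Suc)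
    moreover have "int (Suc m) \<notin> set ys" using lt by auto
    ultimately show "- int (Suc m) # ys \<in> Q (Suc m) \<and> - int (Suc m) \<in> set (- int (Suc m) # ys) \<and> int (Suc m) \<notin> set (- int (Suc m) # ys)"
      by (simp add: Q_def)
  qed
next
  show "{xs\<in>Q (Suc m). - int (Suc m) \<in> set xs \<and> int (Suc m) \<notin> set xs} \<subseteq> Cons (- int (Suc m)) ` Q m"
  proof clarify
    fix xs assume xs: "xs \<in> Q (Suc m)" "- int (Suc m) \<in> set xs" "int (Suc m) \<notin> set xs"
    then have s: "sorted_wrt (<) xs" "set xs \<subseteq> Aset (Suc m)" "good xs" by (auto simp: Q_def)
    have "\<forall>y\<in>set xs. \<not> y < - int (Suc m)" by (auto dest: Ab[OF s(2)])
    then obtain ys where ys: "xs = - int (Suc m) # ys" using hd_min[OF s(1) xs(2)] by blast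
    have "- int (Suc m) \<notin> set ys" using s(1) ys by auto
    then have "set ys \<subseteq> Aset m" using sub_Suc[of ys m] s(2) xs(3) ys by auto
    then have "ys \<in> Q m" using s unfolding ys Q_def by (simp add: good_Cons del: good.simps)
    then show "xs \<in> Cons (- int (Suc m)) ` Q m" using ys by blast
  qed
qed

lemma B3: "{xs\<in>Q (Suc m). - int (Suc m) \<notin> set xs \<and> int (Suc m) \<in> set xs} = (\<lambda>ys. ys @ [int (Suc m)]) ` Q m"
proof
  show "(\<lambda>ys. ys @ [int (Suc m)]) ` Q m \<subseteq> {xs\<in>Q (Suc m). - int (Suc m) \<notin> set xs \<and> int (Suc m) \<in> set xs}"
  proof clarify
    fix ys assume ys: "ys \<in> Q m"
    have lt: "\<forall>y\<in>set ys. - int (Suc m) < y \<and> y < int (Suc m)"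
    proof
      fix y assume "y \<in> set ys"
      from Qb[OF ys(1) this] show "- int (Suc m) < y \<and> y < int (Suc m)" by simp
    qed
    have h: "ys \<noteq> [] \<Longrightarrow> - int (Suc m) < last ys" using lt by simp
    have "sorted_wrt (<) (ys @ [int (Suc m)])" using ys lt by (simp add: Q_def sorted_wrt_append)
    moreover have "good (ys @ [int (Suc m)])" 
    proof -
      have "ys \<noteq> [] \<longrightarrow> last ys \<noteq> - int (Suc m)" using h by auto
      then show ?thesis using ys by (simp add: Q_def good_snoc)
    qed
    moreover have "set (ys @ [int (Suc m)]) \<subseteq> Aset (Suc m)" using ys Aset_mono by (auto simp: Q_def Aset_Suc)
    moreover have "- int (Suc m) \<notin> set ys" using lt by auto
    ultimately show "ys @ [int (Suc m)] \<in> Q (Suc m) \<and> - int (Suc m) \<notin> set (ys @ [int (Suc m)]) \<and> int (Suc m) \<in> set (ys @ [int (Suc m)])"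
      by (simp add: Q_def)
  qed
next
  show "{xs\<in>Q (Suc m). - int (Suc m) \<notin> set xs \<and> int (Suc m) \<in> set xs} \<subseteq> (\<lambda>ys. ys @ [int (Suc m)]) ` Q m"
  proof clarify
    fix xs assume xs: "xs \<in> Q (Suc m)" "- int (Suc m) \<notin> set xs" "int (Suc m) \<in> set xs"
    then have s: "sorted_wrt (<) xs" "set xs \<subseteq> Aset (Suc m)" "good xs" by (auto simp: Q_def)
    have "\<forall>y\<in>set xs. \<not> int (Suc m) < y" by (auto dest: Ab[OF s(2)])
    then obtain ys where ys: "xs = ys @ [int (Suc m)]" using last_max[OF s(1) xs(3)] by blast
    have "int (Suc m) \<notin> set ys" using s(1) ys by (auto simp: sorted_wrt_append)
    then have "set ys \<subseteq> Aset m" using sub_Suc[of ys m] s(2) xs(2) ys by auto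
    then have "ys \<in> Q m" using s unfolding ys Q_def by (simp add: good_snoc sorted_wrt_append)
    then show "xs \<in> (\<lambda>ys. ys @ [int (Suc m)]) ` Q m" using ys by blast
  qed
qed

lemma B4: "{xs\<in>Q (Suc m). - int (Suc m) \<in> set xs \<and> int (Suc m) \<in> set xs} = (\<lambda>ys. - int (Suc m) # ys @ [int (Suc m)]) ` (Q m - {[]})"
proof
  show "(\<lambda>ys. - int (Suc m) # ys @ [int (Suc m)]) ` (Q m - {[]}) \<subseteq> {xs\<in>Q (Suc m). - int (Suc m) \<in> set xs \<and> int (Suc m) \<in> set xs}"
  proof clarify
    fix ys assume ys: "ys \<in> Q m" "ys \<noteq> []"
    have lt: "\<forall>y\<in>set ys. - int (Suc m) < y \<and> y < int (Suc m)"
    proof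
      fix y assume "y \<in> set ys"
      from Qb[OF ys(1) this] show "- int (Suc m) < y \<and> y < int (Suc m)" by simp
    qed
    have hs: "last ys \<in> set ys" "hd ys \<in> set ys" using ys(2) by auto
    have h: "- int (Suc m) < last ys" "hd ys < int (Suc m)" "hd (ys @ [int (Suc m)]) = hd ys"
      using lt hs ys(2) by auto
    have gy: "good ys" using ys by (simp add: Q_def)
    have l: "last ys \<noteq> - int (Suc m)" using lt h by auto
    have g: "good (ys @ [int (Suc m)])" using gy l by (simp add: good_snoc)
    have "hd ys \<noteq> int (Suc m)" using lt h by auto
    then have g2: "good (- int (Suc m) # ys @ [int (Suc m)])" using g h(3) by (simp add: good_Cons del: good.simps)
    have "sorted_wrt (<) (- int (Suc m) # ys @ [int (Suc m)])" using ys lt by (simp add: Q_def sorted_wrt_append)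
    moreover have "set (- int (Suc m) # ys @ [int (Suc m)]) \<subseteq> Aset (Suc m)" using ys Aset_mono by (auto simp: Q_def Aset_Suc)
    ultimately show "- int (Suc m) # ys @ [int (Suc m)] \<in> Q (Suc m) \<and> - int (Suc m) \<in> set (- int (Suc m) # ys @ [int (Suc m)]) \<and> int (Suc m) \<in> set (- int (Suc m) # ys @ [int (Suc m)])"
      using g2 by (simp add: Q_def)
  qed
next
  show "{xs\<in>Q (Suc m). - int (Suc m) \<in> set xs \<and> int (Suc m) \<in> set xs} \<subseteq> (\<lambda>ys. - int (Suc m) # ys @ [int (Suc m)]) ` (Q m - {[]})"
  proof clarify
    fix xs assume xs: "xs \<in> Q (Suc m)" "- int (Suc m) \<in> set xs" "int (Suc m) \<in> set xs"
    then have s: "sorted_wrt (<) xs" "set xs \<subseteq> Aset (Suc m)" "good xs" by (auto simp: Q_def)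
    have "\<forall>y\<in>set xs. \<not> y < - int (Suc m)" by (auto dest: Ab[OF s(2)])
    then obtain zs where zs: "xs = - int (Suc m) # zs" using hd_min[OF s(1) xs(2)] by blast
    have "int (Suc m) \<in> set zs" using xs(3) zs by auto
    moreover have "sorted_wrt (<) zs" using s(1) zs by simp
    moreover have "\<forall>y\<in>set zs. \<not> int (Suc m) < y" 
    proof
      fix y assume "y \<in> set zs" then have "y \<in> set xs" using zs by simp
      from Ab[OF s(2) this] show "\<not> int (Suc m) < y" by simp
    qed
    ultimately obtain ys where ys: "zs = ys @ [int (Suc m)]" using last_max[of "(<)" zs "int (Suc m)"] by blast
    have xs': "xs = - int (Suc m) # ys @ [int (Suc m)]" using zs ys by simp
    have "ys \<noteq> []" using s(3) xs' by auto
    moreover have "ys \<in> Q m"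
    proof -
      have so: "sorted_wrt (<) ys" "\<forall>y\<in>set ys. - int (Suc m) < y \<and> y < int (Suc m)"
        using s(1) unfolding xs' by (auto simp: sorted_wrt_append)
      then have "set ys \<subseteq> Aset m" using sub_Suc[of ys m] s(2) xs' by auto
      moreover have "good ys" using s(3) unfolding xs' by (simp add: good_snoc good_Cons del: good.simps)
      ultimately show ?thesis using so by (simp add: Q_def)
    qed
    ultimately show "xs \<in> (\<lambda>ys. - int (Suc m) # ys @ [int (Suc m)]) ` (Q m - {[]})" using xs' by blast
  qed
qed

lemma split2: "finite P \<Longrightarrow> card P = card {x\<in>P. A x} + card {x\<in>P. \<not> A x}"
proof -
  assume f: "finite P"
  have "P = {x\<in>P. A x} \<union> {x\<in>P. \<not> A x}" by auto
  then have "card P = card ({x\<in>P. A x} \<union> {x\<in>P. \<not> A x})" by simp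
  also have "\<dots> = card {x\<in>P. A x} + card {x\<in>P. \<not> A x}"
    by (rule card_Un_disjoint) (use f in auto)
  finally show ?thesis .
qed

lemma card_Q_Suc: "card (Q (Suc m)) = 4 * card (Q m) - 1"
proof -
  define M where "M = int (Suc m)"
  define P where "P = Q (Suc m)"
  have fP: "finite P" unfolding P_def by (rule finite_Q)
  have c1: "card P = card {x\<in>P. - M \<in> set x} + card {x\<in>P. - M \<notin> set x}"
    using split2[OF fP] .
  have c2: "card {x\<in>P. - M \<in> set x} = card {x\<in>{x\<in>P. - M \<in> set x}. M \<in> set x} + card {x\<in>{x\<in>P. - M \<in> set x}. M \<notin> set x}"
    by (rule split2) (use fP in simp)
  have c3: "card {x\<in>P. - M \<notin> set x} = card {x\<in>{x\<in>P. - M \<notin> set x}. M \<in> set x} + card {x\<in>{x\<in>P. - M \<notin> set x}. M \<notin> set x}"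
    by (rule split2) (use fP in simp)
  have e1: "{x\<in>{x\<in>P. - M \<notin> set x}. M \<notin> set x} = Q m" using B1[of m] unfolding P_def M_def by auto
  have e2: "{x\<in>{x\<in>P. - M \<in> set x}. M \<notin> set x} = Cons (- M) ` Q m" using B2[of m] unfolding P_def M_def by auto
  have e3: "{x\<in>{x\<in>P. - M \<notin> set x}. M \<in> set x} = (\<lambda>ys. ys @ [M]) ` Q m" using B3[of m] unfolding P_def M_def by auto
  have e4: "{x\<in>{x\<in>P. - M \<in> set x}. M \<in> set x} = (\<lambda>ys. - M # ys @ [M]) ` (Q m - {[]})" using B4[of m] unfolding P_def M_def by auto
  have i2: "card (Cons (- M) ` Q m) = card (Q m)" by (rule card_image) (simp add: inj_on_def)
  have i3: "card ((\<lambda>ys. ys @ [M]) ` Q m) = card (Q m)" by (rule card_image) (simp add: inj_on_def)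
  have i4: "card ((\<lambda>ys. - M # ys @ [M]) ` (Q m - {[]})) = card (Q m - {[]})" by (rule card_image) (simp add: inj_on_def)
  have i5: "card (Q m - {[]}) = card (Q m) - 1" using nil_Q finite_Q by (simp add: card_Diff_singleton)
  have "card (Q m) \<ge> 1" using nil_Q finite_Q by (metis One_nat_def Suc_leI card_gt_0_iff empty_iff)
  then show ?thesis using c1 c2 c3 e1 e2 e3 e4 i2 i3 i4 i5 unfolding P_def by simp
qed

lemma card_Q: "3 * card (Q m) = 2 ^ (2 * m + 1) + 1"
proof (induction m)
  case 0
  then show ?case by (simp add: Q0)
next
  case (Suc m)
  have "card (Q m) \<ge> 1" using nil_Q finite_Q by (metis One_nat_def Suc_leI card_gt_0_iff empty_iff)
  then have "3 * card (Q (Suc m)) = 4 * (3 * card (Q m)) - 3" by (simp add: card_Q_Suc)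
  also have "\<dots> = 2 ^ (2 * Suc m + 1) + 1" using Suc.IH by simp
  finally show ?case .
qed



definition dec :: "int \<Rightarrow> (nat \<Rightarrow> real)" where
  "dec k = (if k > 0 then unit_vec (nat k) else - unit_vec (nat (- k)))"

lemma uv_inj: "unit_vec i = unit_vec j \<Longrightarrow> i = j"
  unfolding unit_vec_def by (metis zero_neq_one)

lemma uv_neg: "unit_vec i \<noteq> - unit_vec j"
proof
  assume "unit_vec i = - unit_vec j"
  then have "unit_vec i i = - unit_vec j i" by simp
  then show False unfolding unit_vec_def by (auto split: if_splits)
qed

lemma dec_inj: "inj_on dec (- {0})"
proof (rule inj_onI)
  fix k l assume k: "k \<in> - {0}" and l: "l \<in> - {0}" and e: "dec k = dec l"
  show "k = l"
  proof (cases "k > 0")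
    case True
    show ?thesis
    proof (cases "l > 0")
      case True
      with \<open>k > 0\<close> e have "unit_vec (nat k) = unit_vec (nat l)" by (simp add: dec_def)
      then have "nat k = nat l" by (rule uv_inj)
      then show ?thesis using \<open>k > 0\<close> True by simp
    next
      case False
      with \<open>k > 0\<close> e have "unit_vec (nat k) = - unit_vec (nat (- l))" by (simp add: dec_def)
      then show ?thesis using uv_neg by blast
    qed
  next
    case False
    show ?thesis
    proof (cases "l > 0")
      case True
      with False e have "unit_vec (nat l) = - unit_vec (nat (- k))" by (simp add: dec_def)
      then show ?thesis using uv_neg by blast
    next
      case False2: False
      with False e have "- unit_vec (nat (-k)) = - unit_vec (nat (- l))" by (simp add: dec_def)
      then have "unit_vec (nat (-k)) = unit_vec (nat (- l))" by (auto simp: fun_eq_iff)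
      then have "nat (-k) = nat (-l)" by (rule uv_inj)
      then show ?thesis using False False2 k l by simp
    qed
  qed
qed

lemma dec_neg: "k \<noteq> 0 \<Longrightarrow> dec (- k) = - dec k"
  by (auto simp: dec_def fun_eq_iff)

lemma dec_antipodal: "k \<noteq> 0 \<Longrightarrow> l \<noteq> 0 \<Longrightarrow> (dec k = - dec l) = (k = - l)"
proof -
  assume k: "k \<noteq> 0" and l: "l \<noteq> 0"
  have "(dec k = - dec l) = (dec k = dec (- l))" using dec_neg[OF l] by simp
  also have "\<dots> = (k = - l)" using inj_onD[OF dec_inj, of k "- l"] k l by auto
  finally show ?thesis .
qed

lemma cross_eq: "cross_vertices n = dec ` Aset n"
proof
  show "cross_vertices n \<subseteq> dec ` Aset n"
  proof
    fix v assume "v \<in> cross_vertices n"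
    then obtain i where i: "i \<in> {1..n}" "v = unit_vec i \<or> v = - unit_vec i"
      unfolding cross_vertices_def by blast
    show "v \<in> dec ` Aset n"
    proof (cases "v = unit_vec i")
      case True
      have "dec (int i) = v" using True i by (simp add: dec_def)
      moreover have "int i \<in> Aset n" using i by (simp add: Aset_def)
      ultimately show ?thesis by blast
    next
      case False
      then have "v = - unit_vec i" using i by blast
      then have "dec (- int i) = v" using i by (simp add: dec_def)
      moreover have "- int i \<in> Aset n" using i by (simp add: Aset_def)
      ultimately show ?thesis by blast
    qed
  qed
next
  show "dec ` Aset n \<subseteq> cross_vertices n"
  proof
    fix v assume "v \<in> dec ` Aset n"
    then obtain k where k: "k \<in> Aset n" "v = dec k" by blast
    show "v \<in> cross_vertices n"
    proof (cases "k > 0")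
      case True
      then have "v = unit_vec (nat k)" "nat k \<in> {1..n}" using k by (auto simp: dec_def Aset_def)
      then show ?thesis unfolding cross_vertices_def by blast
    next
      case False
      then have "v = - unit_vec (nat (- k))" "nat (- k) \<in> {1..n}" using k by (auto simp: dec_def Aset_def)
      then show ?thesis unfolding cross_vertices_def by blast
    qed
  qed
qed

definition w :: "(nat \<Rightarrow> real) \<Rightarrow> int \<Rightarrow> real" where
  "w a k = (if k > 0 then a (nat k) else - a (nat (- k)))"

lemma lin_uv: "j \<in> {1..n} \<Longrightarrow> lin_fun n a (unit_vec j) = a j"
proof -
  assume j: "j \<in> {1..n}"
  have "lin_fun n a (unit_vec j) = (\<Sum>i\<in>{1..n}. if i = j then a i else 0)"
    unfolding lin_fun_def unit_vec_def by (rule sum.cong) auto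
  also have "\<dots> = a j" using j by simp
  finally show ?thesis .
qed

lemma lin_dec: "k \<in> Aset n \<Longrightarrow> lin_fun n a (dec k) = w a k"
proof -
  assume k: "k \<in> Aset n"
  have lm: "lin_fun n a (- x) = - lin_fun n a x" for x
    unfolding lin_fun_def by (simp add: sum_negf)
  show ?thesis
  proof (cases "k > 0")
    case True
    then have "nat k \<in> {1..n}" using k by (auto simp: Aset_def)
    then show ?thesis using True lin_uv[of "nat k" n a] by (simp add: dec_def w_def)
  next
    case False
    then have "nat (- k) \<in> {1..n}" using k by (auto simp: Aset_def)
    then show ?thesis using False lin_uv[of "nat (-k)" n a] lm by (simp add: dec_def w_def)
  qed
qed

lemma w_mono:
  assumes pos: "0 < a 1"
    and incr: "\<And>i j. 1 \<le> i \<Longrightarrow> i < j \<Longrightarrow> j \<le> n \<Longrightarrow> a i < a j"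
    and k: "k \<in> Aset n" and l: "l \<in> Aset n" and kl: "k < l"
  shows "w a k < w a l"
proof -
  have apos: "0 < a i" if "1 \<le> i" "i \<le> n" for i
    using pos incr[of 1 i] that by (cases "i = 1") auto
  show ?thesis
  proof (cases "k > 0")
    case True
    then have "l > 0" using kl by simp
    then show ?thesis using True k l kl incr[of "nat k" "nat l"] by (auto simp: w_def Aset_def)
  next
    case False
    then have k0: "k < 0" using k by (auto simp: Aset_def)
    show ?thesis
    proof (cases "l > 0")
      case True
      have "0 < a (nat l)" "0 < a (nat (-k))" using apos[of "nat l"] apos[of "nat (-k)"] True k0 k l by (auto simp: Aset_def)
      then show ?thesis using True k0 by (simp add: w_def)
    next
      case False
      then have "l < 0" using l by (auto simp: Aset_def)
      then show ?thesis using k0 k l kl incr[of "nat (-l)" "nat (-k)"] by (auto simp: w_def Aset_def)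
    qed
  qed
qed

lemma w_less_iff:
  assumes pos: "0 < a 1"
    and incr: "\<And>i j. 1 \<le> i \<Longrightarrow> i < j \<Longrightarrow> j \<le> n \<Longrightarrow> a i < a j"
    and k: "k \<in> Aset n" and l: "l \<in> Aset n"
  shows "(w a k < w a l) = (k < l)"
proof
  assume "w a k < w a l"
  show "k < l"
  proof (rule ccontr)
    assume "\<not> k < l"
    then have "l < k \<or> l = k" by auto
    then show False
      using w_mono[where a=a and n=n and k=l and l=k, OF pos incr l k] \<open>w a k < w a l\<close> by auto
  qed
next
  assume "k < l" then show "w a k < w a l" using w_mono[where a=a and n=n and k=k and l=l, OF pos incr k l] by blast
qed



definition L :: "nat \<Rightarrow> int list set" where
  "L n = {xs. set xs \<subseteq> Aset n \<and> xs \<noteq> [] \<and> hd xs = - int n \<and> last xs = int n \<and> sorted_wrt (<) xs \<and> good xs}"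

lemma sorted_jform: "sorted_wrt (<) (xs::int list) = (\<forall>j. 0 < j \<and> j < length xs \<longrightarrow> xs ! (j - 1) < xs ! j)"
proof -
  have "sorted_wrt (<) xs = (\<forall>i. Suc i < length xs \<longrightarrow> xs ! i < xs ! Suc i)"
    by (rule sorted_wrt_iff_nth_Suc_transp) (simp add: transp_def)
  then show ?thesis using jform[of "length xs" "\<lambda>i j. xs ! i < xs ! j"] by simp
qed

lemma good_jform: "good xs = (\<forall>j. 0 < j \<and> j < length xs \<longrightarrow> xs ! (j - 1) \<noteq> - (xs ! j))"
  using good_Suc[of xs] jform[of "length xs" "\<lambda>i j. xs ! i \<noteq> - (xs ! j)"] by simp

lemma mp_iff:
  assumes pos: "0 < a 1"
    and incr: "\<And>i j. 1 \<le> i \<Longrightarrow> i < j \<Longrightarrow> j \<le> n \<Longrightarrow> a i < a j"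
    and n1: "1 \<le> n"
    and xs: "set xs \<subseteq> Aset n"
  shows "(map dec xs \<in> monotone_paths n a) = (xs \<in> L n)"
proof -
  have mN: "- int n \<in> Aset n" and pN: "int n \<in> Aset n" using n1 by (auto simp: Aset_def)
  have inj: "inj_on dec (Aset n)" by (rule inj_on_subset[OF dec_inj]) (auto simp: Aset_def)
  have dmN: "dec (- int n) = - unit_vec n" using n1 by (simp add: dec_def)
  have dpN: "dec (int n) = unit_vec n" using n1 by (simp add: dec_def)
  have setok: "set (map dec xs) \<subseteq> cross_vertices n" using xs cross_eq by auto
  have hdiff: "xs \<noteq> [] \<Longrightarrow> (hd (map dec xs) = - unit_vec n) = (hd xs = - int n)"
  proof -
    assume ne: "xs \<noteq> []"
    then have "hd xs \<in> Aset n" using xs by auto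
    then have "(dec (hd xs) = dec (- int n)) = (hd xs = - int n)" using inj_on_eq_iff[OF inj _ mN] by blast
    then show ?thesis using ne dmN by (simp add: hd_map)
  qed
  have lastiff: "xs \<noteq> [] \<Longrightarrow> (last (map dec xs) = unit_vec n) = (last xs = int n)"
  proof -
    assume ne: "xs \<noteq> []"
    then have "last xs \<in> Aset n" using xs by auto
    then have "(dec (last xs) = dec (int n)) = (last xs = int n)" using inj_on_eq_iff[OF inj _ pN] by blast
    then show ?thesis using ne dpN by (simp add: last_map)
  qed
  have step: "(map dec xs ! (j - 1) \<noteq> - (map dec xs ! j) \<and>
          lin_fun n a (map dec xs ! (j - 1)) < lin_fun n a (map dec xs ! j))
       = (xs ! (j - 1) \<noteq> - (xs ! j) \<and> xs ! (j - 1) < xs ! j)"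
    if j: "0 < j" "j < length xs" for j
  proof -
    have k: "xs ! (j - 1) \<in> Aset n" and l: "xs ! j \<in> Aset n" 
    proof -
      have "j - 1 < length xs" using j by simp
      then show "xs ! (j - 1) \<in> Aset n" "xs ! j \<in> Aset n" using j xs nth_mem by blast+
    qed
    have k0: "xs ! (j - 1) \<noteq> 0" "xs ! j \<noteq> 0" using k l by (auto simp: Aset_def)
    have "(map dec xs ! (j - 1) \<noteq> - (map dec xs ! j)) = (xs ! (j - 1) \<noteq> - (xs ! j))"
      using dec_antipodal[OF k0] j by simp
    moreover have "(lin_fun n a (map dec xs ! (j - 1)) < lin_fun n a (map dec xs ! j)) = (xs ! (j - 1) < xs ! j)"
      using j lin_dec[OF k, of a] lin_dec[OF l, of a] w_less_iff[where a=a and n=n, OF pos incr k l] by simp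
    ultimately show ?thesis by simp
  qed
  have idx: "(\<forall>j. 0 < j \<and> j < length (map dec xs) \<longrightarrow>
          map dec xs ! (j - 1) \<noteq> - (map dec xs ! j) \<and>
          lin_fun n a (map dec xs ! (j - 1)) < lin_fun n a (map dec xs ! j))
      = (sorted_wrt (<) xs \<and> good xs)"
  proof -
    have "(\<forall>j. 0 < j \<and> j < length (map dec xs) \<longrightarrow>
          map dec xs ! (j - 1) \<noteq> - (map dec xs ! j) \<and>
          lin_fun n a (map dec xs ! (j - 1)) < lin_fun n a (map dec xs ! j))
      = (\<forall>j. 0 < j \<and> j < length xs \<longrightarrow> xs ! (j - 1) \<noteq> - (xs ! j) \<and> xs ! (j - 1) < xs ! j)"
      unfolding length_map using step by blast
    also have "\<dots> = (sorted_wrt (<) xs \<and> good xs)"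
      unfolding sorted_jform good_jform by blast
    finally show ?thesis .
  qed
  show ?thesis
    unfolding monotone_paths_def L_def mem_Collect_eq idx
    using setok hdiff lastiff xs by auto
qed

lemma mp_eq:
  assumes pos: "0 < a 1"
    and incr: "\<And>i j. 1 \<le> i \<Longrightarrow> i < j \<Longrightarrow> j \<le> n \<Longrightarrow> a i < a j"
    and n1: "1 \<le> n"
  shows "monotone_paths n a = map dec ` L n"
proof
  show "map dec ` L n \<subseteq> monotone_paths n a"
    using mp_iff[where a=a and n=n, OF pos incr n1] by (auto simp: L_def)
next
  show "monotone_paths n a \<subseteq> map dec ` L n"
  proof
    fix vs assume vs: "vs \<in> monotone_paths n a"
    then have sv: "set vs \<subseteq> dec ` Aset n" using cross_eq by (simp add: monotone_paths_def)
    define xs where "xs = map (inv_into (Aset n) dec) vs"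
    have mx: "map dec xs = vs" unfolding xs_def using sv
      by (simp add: map_idI f_inv_into_f subset_iff)
    have sx: "set xs \<subseteq> Aset n" unfolding xs_def using sv
      by (auto intro: inv_into_into)
    have "xs \<in> L n" using mp_iff[where a=a and n=n, OF pos incr n1 sx] mx vs by simp
    then show "vs \<in> map dec ` L n" using mx by blast
  qed
qed

lemma card_mp:
  assumes pos: "0 < a 1"
    and incr: "\<And>i j. 1 \<le> i \<Longrightarrow> i < j \<Longrightarrow> j \<le> n \<Longrightarrow> a i < a j"
    and n1: "1 \<le> n"
  shows "card (monotone_paths n a) = card (L n)"
proof -
  have "inj_on (map dec) (L n)"
  proof (rule inj_onI)
    fix xs ys assume "xs \<in> L n" "ys \<in> L n" "map dec xs = map dec ys"
    moreover have "inj_on dec (set xs \<union> set ys)"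
      using \<open>xs \<in> L n\<close> \<open>ys \<in> L n\<close>
      by (intro inj_on_subset[OF dec_inj]) (auto simp: L_def Aset_def)
    ultimately show "xs = ys" using map_inj_on by blast
  qed
  then show ?thesis using mp_eq[where a=a and n=n, OF pos incr n1] by (simp add: card_image)
qed

lemma L_eq: "L (Suc m) = {xs\<in>Q (Suc m). - int (Suc m) \<in> set xs \<and> int (Suc m) \<in> set xs}"
proof
  show "L (Suc m) \<subseteq> {xs\<in>Q (Suc m). - int (Suc m) \<in> set xs \<and> int (Suc m) \<in> set xs}"
  proof
    fix xs assume "xs \<in> L (Suc m)"
    then have x: "set xs \<subseteq> Aset (Suc m)" "xs \<noteq> []" "hd xs = - int (Suc m)" "last xs = int (Suc m)" "sorted_wrt (<) xs" "good xs"
      by (auto simp: L_def)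
    have "hd xs \<in> set xs" "last xs \<in> set xs" using x(2) by auto
    then show "xs \<in> {xs\<in>Q (Suc m). - int (Suc m) \<in> set xs \<and> int (Suc m) \<in> set xs}"
      using x by (simp add: Q_def)
  qed
next
  show "{xs\<in>Q (Suc m). - int (Suc m) \<in> set xs \<and> int (Suc m) \<in> set xs} \<subseteq> L (Suc m)"
  proof
    fix xs assume a: "xs \<in> {xs\<in>Q (Suc m). - int (Suc m) \<in> set xs \<and> int (Suc m) \<in> set xs}"
    then obtain ys where "xs = - int (Suc m) # ys @ [int (Suc m)]" using B4[of m] by blast
    then show "xs \<in> L (Suc m)" using a by (simp add: L_def Q_def)
  qed
qed

lemma card_L: "card (L (Suc m)) = card (Q m) - 1"
proof -
  have "card (L (Suc m)) = card ((\<lambda>ys. - int (Suc m) # ys @ [int (Suc m)]) ` (Q m - {[]}))"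
    using L_eq B4 by simp
  also have "\<dots> = card (Q m - {[]})" by (rule card_image) (simp add: inj_on_def)
  also have "\<dots> = card (Q m) - 1" using nil_Q finite_Q by (simp add: card_Diff_singleton)
  finally show ?thesis .
qed

theorem theorem1p1:
  fixes n :: nat and a :: "nat \<Rightarrow> real"
  assumes "n \<ge> 2"
    and "0 < a 1"
    and "\<And>i j. 1 \<le> i \<Longrightarrow> i < j \<Longrightarrow> j \<le> n \<Longrightarrow> a i < a j"
  shows "real (card (monotone_paths n a)) = (2 ^ (2 * n - 1) - 2) / 3"
proof -
  obtain m where m: "n = Suc m" using assms(1) by (cases n) auto
  have c: "card (monotone_paths n a) = card (Q m) - 1"
    using card_mp[where a=a and n=n, OF assms(2,3)] assms(1) card_L m by simp
  have q: "3 * card (Q m) = 2 ^ (2 * m + 1) + 1" by (rule card_Q)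
  have e: "2 * n - 1 = 2 * m + 1" using m by simp
  have q1: "card (Q m) \<ge> 1" using q by simp
  have "3 * card (monotone_paths n a) = 2 ^ (2 * n - 1) - 2"
    using c q q1 e by simp
  moreover have "(2::nat) ^ (2 * n - 1) \<ge> 2"
    using e by (simp add: Suc_le_eq)
  ultimately have "real (3 * card (monotone_paths n a)) = 2 ^ (2 * n - 1) - 2"
    by (simp add: of_nat_diff)
  then show ?thesis by simp
qed

end
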